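(* For every $M_q=\begin{pmatrix}\mathcal{R}(q) & \mathcal{V}(q)\\ \mathcal{S}(q) & \mathcal{U}(q)\end{pmatrix}\in G_q$, the polynomial $q^2-q+1$ divides $\mathcal{V}(q)\,q^4+(\mathcal{U}(q)-\mathcal{R}(q))\,q^2-\mathcal{S}(q)$ in $\mathbb{Z}[q,q^{-1}]$.
   Context: Let $q$ be a formal parameter and let $R_q=\begin{pmatrix} q & 1\\ 0 & 1\end{pmatrix}$, $S_q=\begin{pmatrix} 0 & -q^{-1}\\ 1 & 0\end{pmatrix}\in \mathrm{GL}(2,\mathbb{Z}[q,q^{-1}])$. Let $G_q=\langle R_q,S_q\rangle$ be the group they generate. *)

theory Defs
  imports "HOL-Computational_Algebra.Formal_Laurent_Series"
begin

text \<open>Z[q,q^-1] is realised inside the formal Laurent series ring int fls as the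
  Laurent series with finitely many nonzero coefficients; q is fls_X.\<close>

definition laurent_poly :: "int fls set" where
  "laurent_poly = {f. finite {n. fls_nth f n \<noteq> 0}}"

type_synonym mat2 = "int fls \<times> int fls \<times> int fls \<times> int fls"

fun mmul :: "mat2 \<Rightarrow> mat2 \<Rightarrow> mat2" where
  "mmul (a, b, c, d) (a', b', c', d') =
     (a * a' + b * c', a * b' + b * d', c * a' + d * c', c * b' + d * d')"

definition mat_id :: mat2 where "mat_id = (1, 0, 0, 1)"

definition R_q :: mat2 where "R_q = (fls_X, 1, 0, 1)"

definition S_q :: mat2 where "S_q = (0, - fls_X_inv, 1, 0)"

inductive_set G_q :: "mat2 set" where
  id_in: "mat_id \<in> G_q"
| R_in: "R_q \<in> G_q"
| S_in: "S_q \<in> G_q"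
| mult_in: "A \<in> G_q \<Longrightarrow> B \<in> G_q \<Longrightarrow> mmul A B \<in> G_q"
| inv_in: "A \<in> G_q \<Longrightarrow> mmul A B = mat_id \<Longrightarrow> mmul B A = mat_id \<Longrightarrow> B \<in> G_q"

end

theory Submission
  imports Defs
begin

lemma lp_iff: "f \<in> laurent_poly \<longleftrightarrow> (\<exists>N. \<forall>n>N. fls_nth f n = 0)"
proof
  assume "f \<in> laurent_poly"
  then have "finite {n. fls_nth f n \<noteq> 0}" by (simp add: laurent_poly_def)
  then have "bdd_above {n. fls_nth f n \<noteq> 0}" by (rule bdd_above_finite)
  then obtain M where "\<forall>x\<in>{n. fls_nth f n \<noteq> 0}. x \<le> M" by (auto simp: bdd_above_def)
  then show "\<exists>N. \<forall>n>N. fls_nth f n = 0" by (intro exI[of _ M]) (meson leD mem_Collect_eq)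
next
  assume "\<exists>N. \<forall>n>N. fls_nth f n = 0"
  then obtain N where N: "\<forall>n>N. fls_nth f n = 0" by blast
  have "{n. fls_nth f n \<noteq> 0} \<subseteq> {fls_subdegree f..N}"
    using N by (auto simp: not_less[symmetric] intro: fls_eq0_below_subdegree)
  then show "f \<in> laurent_poly" unfolding laurent_poly_def
    using finite_subset by blast
qed

lemma lp_add: "f \<in> laurent_poly \<Longrightarrow> g \<in> laurent_poly \<Longrightarrow> f + g \<in> laurent_poly"
  unfolding lp_iff by (metis add.right_neutral fls_plus_nth max.strict_boundedE)

lemma lp_uminus: "f \<in> laurent_poly \<Longrightarrow> - f \<in> laurent_poly"
  unfolding lp_iff by auto

lemma lp_diff: "f \<in> laurent_poly \<Longrightarrow> g \<in> laurent_poly \<Longrightarrow> f - g \<in> laurent_poly"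
  unfolding lp_iff by (metis diff_zero fls_minus_nth max.strict_boundedE)

lemma lp_mult:
  assumes "f \<in> laurent_poly" "g \<in> laurent_poly" shows "f * g \<in> laurent_poly"
proof -
  obtain M where M: "\<forall>n>M. fls_nth f n = 0" using assms(1) unfolding lp_iff by blast
  obtain N where N: "\<forall>n>N. fls_nth g n = 0" using assms(2) unfolding lp_iff by blast
  have "\<forall>n>M+N. fls_nth (f*g) n = 0"
  proof (intro allI impI)
    fix n assume "n > M + N"
    then have "\<forall>i. fls_nth f i * fls_nth g (n - i) = 0" using M N
      by (metis add.commute diff_less_eq linorder_not_le mult_eq_0_iff add_le_mono1 le_less_trans
            less_diff_eq)
    then show "fls_nth (f*g) n = 0" unfolding fls_times_nth(2) by (intro sum.neutral) blast
  qed
  then show ?thesis unfolding lp_iff by blast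
qed

lemma lp_one: "1 \<in> laurent_poly" unfolding lp_iff by (metis fls_one_nth less_irrefl)
lemma lp_zero: "0 \<in> laurent_poly" unfolding lp_iff by simp
lemma lp_X: "fls_X \<in> laurent_poly" unfolding lp_iff by (rule exI[of _ 1]) simp
lemma lp_X_inv: "fls_X_inv \<in> laurent_poly" unfolding lp_iff by (rule exI[of _ 0]) simp

lemma lp_pow: "f \<in> laurent_poly \<Longrightarrow> f ^ n \<in> laurent_poly"
  by (induction n) (auto intro: lp_mult lp_one)

lemmas lp_closed = lp_add lp_uminus lp_diff lp_mult lp_one lp_zero lp_X lp_X_inv lp_pow

definition TT :: "mat2 \<Rightarrow> int fls" where
  "TT M = (case M of (r, v, s, u) \<Rightarrow> v * fls_X ^ 4 + (u - r) * fls_X ^ 2 - s)"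

definition PP :: "int fls" where "PP = fls_X ^ 2 - fls_X + 1"

definition Inv :: "mat2 \<Rightarrow> bool" where
  "Inv M = (case M of (r, v, s, u) \<Rightarrow> r \<in> laurent_poly \<and> v \<in> laurent_poly \<and>
      s \<in> laurent_poly \<and> u \<in> laurent_poly \<and> (\<exists>e\<in>laurent_poly. (r*u - v*s) * e = 1) \<and>
      (\<exists>c\<in>laurent_poly. TT M = PP * c))"

lemma XXinv: "fls_X * (fls_X_inv :: int fls) = 1"
  by (rule fls_eqI) (simp add: fls_X_inv_times_conv_shift)

lemma Inv_G: "M \<in> G_q \<Longrightarrow> Inv M"
proof (induction rule: G_q.induct)
  case id_in
  show ?case unfolding Inv_def mat_id_def TT_def by (auto intro!: lp_closed bexI[of _ 1] bexI[of _ 0])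
next
  case R_in
  have "TT R_q = PP * fls_X^2" unfolding TT_def R_q_def PP_def by (simp add: algebra_simps power_numeral_reduce)
  then show ?case unfolding Inv_def R_q_def
    apply (simp only: prod.case)
    apply (intro conjI)
    apply (auto intro!: lp_closed)[4]
    apply (rule bexI[of _ fls_X_inv]) apply (simp add: XXinv) apply (rule lp_closed)
    apply (rule bexI[of _ "fls_X^2"]) by (auto intro!: lp_closed simp: R_q_def)
next
  case S_in
  have "TT S_q = PP * (- fls_X - 1)" unfolding TT_def S_q_def PP_def
    by (simp add: algebra_simps power_numeral_reduce XXinv)
  then show ?case unfolding Inv_def S_q_def
    apply (simp only: prod.case)
    apply (intro conjI)
    apply (auto intro!: lp_closed)[4]
    apply (rule bexI[of _ fls_X]) apply (simp add: XXinv mult.commute) apply (rule lp_closed)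
    apply (rule bexI[of _ "- fls_X - 1"]) by (auto intro!: lp_closed simp: S_q_def)
next
  case (mult_in A B)
  obtain a b c d where A: "A = (a,b,c,d)" by (cases A) auto
  obtain a' b' c' d' where B: "B = (a',b',c',d')" by (cases B) auto
  from mult_in.IH obtain e1 e2 k1 k2 where
    h: "a \<in> laurent_poly" "b \<in> laurent_poly" "c \<in> laurent_poly" "d \<in> laurent_poly"
       "a' \<in> laurent_poly" "b' \<in> laurent_poly" "c' \<in> laurent_poly" "d' \<in> laurent_poly"
       "e1 \<in> laurent_poly" "e2 \<in> laurent_poly" "k1 \<in> laurent_poly" "k2 \<in> laurent_poly"
       "(a*d - b*c) * e1 = 1" "(a'*d' - b'*c') * e2 = 1"
       "TT A = PP * k1" "TT B = PP * k2"
    unfolding Inv_def A B by auto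
  have T: "TT (mmul A B) = (a' - b' * fls_X^2) * TT A + TT B * (fls_X^2 * b + d)"
    unfolding A B TT_def by (simp add: algebra_simps power_numeral_reduce)
  have D: "((a * a' + b * c') * (c * b' + d * d') - (a * b' + b * d') * (c * a' + d * c')) * (e1 * e2)
       = ((a*d - b*c) * e1) * ((a'*d' - b'*c') * e2)"
    by (simp add: algebra_simps)
  show ?case unfolding Inv_def A B mmul.simps
    apply (simp only: prod.case)
    apply (intro conjI)
    using h apply (auto intro!: lp_closed)[4]
    using D h apply (auto intro!: lp_closed bexI[of _ "e1*e2"])[1]
    apply (rule bexI[of _ "(a' - b' * fls_X^2) * k1 + k2 * (fls_X^2 * b + d)"])
    using T h unfolding A B mmul.simps apply (simp add: algebra_simps)
    using h by (auto intro!: lp_closed)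
next
  case (inv_in A B)
  obtain a b c d where A: "A = (a,b,c,d)" by (cases A) auto
  obtain a' b' c' d' where B: "B = (a',b',c',d')" by (cases B) auto
  from inv_in.IH obtain e1 k1 where
    h: "a \<in> laurent_poly" "b \<in> laurent_poly" "c \<in> laurent_poly" "d \<in> laurent_poly"
       "e1 \<in> laurent_poly" "k1 \<in> laurent_poly"
       "(a*d - b*c) * e1 = 1" "TT A = PP * k1"
    unfolding Inv_def A B by auto
  from inv_in.hyps(2) have eq: "a*a' + b*c' = 1" "a*b' + b*d' = 0" "c*a' + d*c' = 0" "c*b' + d*d' = 1"
    unfolding A B mat_id_def by auto
  have "(a*d - b*c) * a' = d*(a*a' + b*c') - b*(c*a' + d*c')" by (simp add: algebra_simps)
  then have "(a*d - b*c) * a' = d" using eq by simp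
  then have a': "a' = e1 * d" using h(7) by (metis mult.commute mult.left_neutral mult.assoc)
  have "(a*d - b*c) * b' = d*(a*b' + b*d') - b*(c*b' + d*d')" by (simp add: algebra_simps)
  then have "(a*d - b*c) * b' = - b" using eq by simp
  then have b': "b' = - e1 * b" using h(7) by (metis mult.commute mult.left_neutral mult.assoc mult_minus_left)
  have "(a*d - b*c) * c' = a*(c*a' + d*c') - c*(a*a' + b*c')" by (simp add: algebra_simps)
  then have "(a*d - b*c) * c' = - c" using eq by simp
  then have c': "c' = - e1 * c" using h(7) by (metis mult.commute mult.left_neutral mult.assoc mult_minus_left)
  have "(a*d - b*c) * d' = a*(c*b' + d*d') - c*(a*b' + b*d')" by (simp add: algebra_simps)
  then have "(a*d - b*c) * d' = a" using eq by simp
  then have d': "d' = e1 * a" using h(7) by (metis mult.commute mult.left_neutral mult.assoc)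
  have T: "TT B = - e1 * TT A" unfolding A B TT_def a' b' c' d' by (simp add: algebra_simps)
  have D: "(a'*d' - b'*c') * (a*d - b*c) = 1"
  proof -
    have "(a'*d' - b'*c') * (a*d - b*c) = ((a*d - b*c) * e1) * ((a*d - b*c) * e1)"
      unfolding a' b' c' d' by (simp add: algebra_simps)
    then show ?thesis using h(7) by simp
  qed
  show ?case unfolding Inv_def B
    apply (simp only: prod.case)
    apply (intro conjI)
    using h unfolding a' b' c' d' apply (auto intro!: lp_closed)[4]
    using D h apply (auto intro!: lp_closed bexI[of _ "a*d - b*c"] simp: a' b' c' d')[1]
    apply (rule bexI[of _ "- e1 * k1"])
    using T h unfolding B a' b' c' d' apply (simp add: algebra_simps)
    using h by (auto intro!: lp_closed)
qed

theorem corollary5p1: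
  assumes "(r, v, s, u) \<in> G_q"
  shows "\<exists>c \<in> laurent_poly.
           v * fls_X ^ 4 + (u - r) * fls_X ^ 2 - s = (fls_X ^ 2 - fls_X + 1) * c"
  using Inv_G[OF assms] unfolding Inv_def TT_def PP_def by auto

end
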